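(* Let $n,k$ be integers with $2\le k\le n-1$, let $\varepsilon\in(0,1)$ and $\delta>0$, let $\gamma:=\frac{k(n-k)}{2n(n-1)}$, and let $$m:=\frac{12n(n-1)^2}{\varepsilon^2(n-k)^2k}\ln\frac{2n^2}{\delta}.$$ Let $\mathcal{I}=(I_1,\dots,I_m)$ be a sequence of $k$-element subsets of $[n]$ sampled independently and uniformly at random. Then with probability at least $1-\delta$ both of the following hold: (1) for every $i\in[n]$, $f_{ii}:=\frac{1}{m}|\{\ell: i\in I_\ell\}|\in\left[\frac{k}{n}-\varepsilon\gamma,\frac{k}{n}+\varepsilon\gamma\right]$; (2) for every pair of distinct $i,j\in[n]$, $f_{ij}:=\frac{1}{m}|\{\ell:\{i,j\}\subseteq I_\ell\}|\in\left[\frac{k(k-1)}{n(n-1)}-\varepsilon\gamma,\frac{k(k-1)}{n(n-1)}+\varepsilon\gamma\right]$.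
   Context: $[n]=\{1,\dots,n\}$. *)

theory Defs
  imports "HOL-Probability.Probability" "HOL-Probability.Product_PMF"
begin

definition ksubset_pmf :: "nat \<Rightarrow> nat \<Rightarrow> nat set pmf" where
  "ksubset_pmf n k = pmf_of_set {I. I \<subseteq> {1..n} \<and> card I = k}"

text \<open>m independent uniform samples I_0, ..., I_(m-1) (indices shifted to start at 0).\<close>
definition sample_pmf :: "nat \<Rightarrow> nat \<Rightarrow> nat \<Rightarrow> (nat \<Rightarrow> nat set) pmf" where
  "sample_pmf n k m = Pi_pmf {..<m} {} (\<lambda>_. ksubset_pmf n k)"

definition freq1 :: "nat \<Rightarrow> (nat \<Rightarrow> nat set) \<Rightarrow> nat \<Rightarrow> real" where
  "freq1 m I i = real (card {l \<in> {..<m}. i \<in> I l}) / real m"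

definition freq2 :: "nat \<Rightarrow> (nat \<Rightarrow> nat set) \<Rightarrow> nat \<Rightarrow> nat \<Rightarrow> real" where
  "freq2 m I i j = real (card {l \<in> {..<m}. {i, j} \<subseteq> I l}) / real m"

end

theory Submission
  imports Defs
begin

lemma mgf_bound:
  fixes Q :: "'b pmf" and A :: "'b set" and d :: 'b and s :: real
  assumes fin: "finite (set_pmf Q)"
  shows "measure_pmf.expectation (Pi_pmf {..<m} d (\<lambda>_. Q))
           (\<lambda>f. exp (s * real (card {l\<in>{..<m}. f l \<in> A})))
         \<le> exp (real m * measure_pmf.prob Q A * (exp s - 1))"
proof -
  define p where "p = measure_pmf.prob Q A"
  have eq: "exp (s * real (card {l\<in>{..<m}. f l \<in> A})) = (\<Prod>l\<in>{..<m}. (\<lambda>v. if v \<in> A then exp s else 1) (f l))" for f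
  proof -
    have "real (card {l\<in>{..<m}. f l \<in> A}) = (\<Sum>l\<in>{..<m}. if f l \<in> A then 1 else 0)"
      by (simp add: sum.If_cases Int_def conj_commute)
    then have "s * real (card {l\<in>{..<m}. f l \<in> A}) = (\<Sum>l\<in>{..<m}. if f l \<in> A then s else 0)"
      by (simp add: sum_distrib_left if_distrib cong: if_cong)
    then show ?thesis by (simp add: exp_sum if_distrib cong: if_cong)
  qed
  have int: "integrable (measure_pmf Q) g" for g :: "'b \<Rightarrow> real"
    using fin by (rule integrable_measure_pmf_finite)
  have E1: "measure_pmf.expectation Q (\<lambda>v. if v \<in> A then exp s else 1) = 1 + p * (exp s - 1)"
  proof -
    have "(\<lambda>v. if v \<in> A then exp s else 1) = (\<lambda>v. 1 + (exp s - 1) * indicator A v)"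
      by (auto simp: indicator_def fun_eq_iff)
    then show ?thesis using int by (simp add: p_def measure_pmf.prob_space)
  qed
  have "measure_pmf.expectation (Pi_pmf {..<m} d (\<lambda>_. Q)) (\<lambda>f. exp (s * real (card {l\<in>{..<m}. f l \<in> A})))
      = measure_pmf.expectation (Pi_pmf {..<m} d (\<lambda>_. Q)) (\<lambda>f. \<Prod>l\<in>{..<m}. (\<lambda>v. if v \<in> A then exp s else 1) (f l))"
    by (simp only: eq)
  also have "\<dots> = (\<Prod>l\<in>{..<m}. measure_pmf.expectation Q (\<lambda>v. if v \<in> A then exp s else 1))"
    by (rule expectation_prod_Pi_pmf) (auto intro: int)
  also have "\<dots> = (1 + p * (exp s - 1)) ^ m" using E1 by simp
  also have "\<dots> \<le> exp (p * (exp s - 1)) ^ m"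
  proof (rule power_mono)
    have "0 \<le> p" "p \<le> 1" by (auto simp: p_def)
    have "0 \<le> 1 - p + p * exp s" using \<open>0 \<le> p\<close> \<open>p \<le> 1\<close> by (simp add: add_nonneg_nonneg)
    then show "0 \<le> 1 + p * (exp s - 1)" by (simp add: algebra_simps)
  qed simp
  also have "\<dots> = exp (real m * p * (exp s - 1))"
    by (simp add: exp_of_nat_mult[symmetric] mult.assoc)
  finally show ?thesis by (simp add: p_def)
qed

lemma tail_exp:
  fixes Q :: "'b pmf" and A :: "'b set" and d :: 'b and s a :: real
  assumes fin: "finite (set_pmf Q)"
  shows "measure_pmf.prob (Pi_pmf {..<m} d (\<lambda>_. Q))
           {f. exp (s * a) \<le> exp (s * real (card {l\<in>{..<m}. f l \<in> A}))}
         \<le> exp (real m * measure_pmf.prob Q A * (exp s - 1) - s * a)"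
proof -
  let ?P = "Pi_pmf {..<m} d (\<lambda>_. Q)"
  let ?u = "\<lambda>f. exp (s * real (card {l\<in>{..<m}. f l \<in> A}))"
  have finP: "finite (set_pmf ?P)"
    by (simp add: set_Pi_pmf finite_PiE_dflt fin)
  have "measure_pmf.prob ?P {f. exp (s * a) \<le> ?u f} = measure (measure_pmf ?P) {f\<in>space (measure_pmf ?P). ?u f \<ge> exp (s * a)}"
    by simp
  also have "\<dots> \<le> measure_pmf.expectation ?P ?u / exp (s * a)"
    by (rule integral_Markov_inequality_measure[where A=UNIV])
       (auto intro: integrable_measure_pmf_finite[OF finP])
  also have "\<dots> \<le> exp (real m * measure_pmf.prob Q A * (exp s - 1)) / exp (s * a)"
    by (rule divide_right_mono[OF mgf_bound[OF fin]]) simp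
  also have "\<dots> = exp (real m * measure_pmf.prob Q A * (exp s - 1) - s * a)"
    by (simp add: exp_diff)
  finally show ?thesis .
qed

lemma tail_upper:
  fixes Q :: "'b pmf" and A :: "'b set" and d :: 'b and s a :: real
  assumes fin: "finite (set_pmf Q)" and s: "0 \<le> s"
  shows "measure_pmf.prob (Pi_pmf {..<m} d (\<lambda>_. Q))
           {f. a \<le> real (card {l\<in>{..<m}. f l \<in> A})}
         \<le> exp (real m * measure_pmf.prob Q A * (exp s - 1) - s * a)"
proof -
  have "measure_pmf.prob (Pi_pmf {..<m} d (\<lambda>_. Q)) {f. a \<le> real (card {l\<in>{..<m}. f l \<in> A})}
     \<le> measure_pmf.prob (Pi_pmf {..<m} d (\<lambda>_. Q)) {f. exp (s * a) \<le> exp (s * real (card {l\<in>{..<m}. f l \<in> A}))}"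
    by (rule measure_pmf.finite_measure_mono) (auto intro: mult_left_mono s)
  also note tail_exp[OF fin]
  finally show ?thesis .
qed

lemma tail_lower:
  fixes Q :: "'b pmf" and A :: "'b set" and d :: 'b and s a :: real
  assumes fin: "finite (set_pmf Q)" and s: "0 \<le> s"
  shows "measure_pmf.prob (Pi_pmf {..<m} d (\<lambda>_. Q))
           {f. real (card {l\<in>{..<m}. f l \<in> A}) \<le> a}
         \<le> exp (real m * measure_pmf.prob Q A * (exp (-s) - 1) + s * a)"
proof -
  have "measure_pmf.prob (Pi_pmf {..<m} d (\<lambda>_. Q)) {f. real (card {l\<in>{..<m}. f l \<in> A}) \<le> a}
     \<le> measure_pmf.prob (Pi_pmf {..<m} d (\<lambda>_. Q)) {f. exp ((-s) * a) \<le> exp ((-s) * real (card {l\<in>{..<m}. f l \<in> A}))}"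
    by (rule measure_pmf.finite_measure_mono) (auto intro: mult_left_mono s)
  also note tail_exp[OF fin]
  finally show ?thesis by simp
qed

lemma ln_lower_bound:
  fixes x :: real assumes x: "0 \<le> x"
  shows "2 * x / (2 + x) \<le> ln (1 + x)"
proof -
  define g where "g = (\<lambda>y::real. ln (1 + y) - 2 * y / (2 + y))"
  have "g 0 \<le> g x"
  proof (rule DERIV_nonneg_imp_nondecreasing[OF x])
    fix y :: real assume y: "0 \<le> y" "y \<le> x"
    have "DERIV g y :> (1 / (1 + y) - 4 / (2 + y)^2)"
      unfolding g_def using y
      by (auto intro!: derivative_eq_intros simp: field_simps power2_eq_square)
    moreover have "4 / (2 + y)^2 \<le> 1 / (1 + y)"
    proof -
      have "4 * (1 + y) \<le> (2 + y)^2" by (simp add: power2_eq_square algebra_simps)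
      then show ?thesis using y by (simp add: divide_simps)
    qed
    ultimately show "\<exists>d. DERIV g y :> d \<and> 0 \<le> d" by (metis diff_ge_0_iff_ge)
  qed
  then show ?thesis by (simp add: g_def)
qed

lemma exp_neg_upper:
  fixes x :: real assumes x: "0 \<le> x"
  shows "exp (- x) \<le> 1 - x + x^2 / 2"
proof -
  define g where "g = (\<lambda>y::real. 1 - y + y^2 / 2 - exp (- y))"
  have "g 0 \<le> g x"
  proof (rule DERIV_nonneg_imp_nondecreasing[OF x])
    fix y :: real assume y: "0 \<le> y" "y \<le> x"
    have "DERIV g y :> (- 1 + y + exp (- y))"
      unfolding g_def
      by (auto intro!: derivative_eq_intros simp: field_simps power2_eq_square)
    moreover have "0 \<le> - 1 + y + exp (- y)" using exp_ge_add_one_self[of "-y"] by simp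
    ultimately show "\<exists>d. DERIV g y :> d \<and> 0 \<le> d" by auto
  qed
  then show ?thesis by (simp add: g_def)
qed


lemma chernoff_upper:
  fixes Q :: "'b pmf" and A :: "'b set" and d :: 'b and p t L :: real
  assumes fin: "finite (set_pmf Q)" and p: "p = measure_pmf.prob Q A" "0 < p"
    and t: "0 < t" and L: "L \<le> real m * t^2 / (2 * p + t)"
  shows "measure_pmf.prob (Pi_pmf {..<m} d (\<lambda>_. Q))
           {f. real m * (p + t) \<le> real (card {l\<in>{..<m}. f l \<in> A})} \<le> exp (- L)"
proof -
  define x where "x = t / p"
  have x0: "0 \<le> x" using p t by (simp add: x_def)
  define s where "s = ln (1 + x)"
  have s0: "0 \<le> s" using x0 by (simp add: s_def)
  have es: "exp s = 1 + x" using x0 by (simp add: s_def)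
  have sl: "2 * t / (2 * p + t) \<le> s"
  proof -
    have "2 * x / (2 + x) = 2 * t / (2 * p + t)" using p t by (simp add: x_def field_simps)
    then show ?thesis using ln_lower_bound[OF x0] by (simp add: s_def)
  qed
  have m0: "0 \<le> real m" by simp
  have "real m * p * (exp s - 1) - s * (real m * (p + t)) = real m * t - s * (real m * (p + t))"
    using p by (simp add: es x_def)
  also have "\<dots> \<le> real m * t - 2 * t / (2 * p + t) * (real m * (p + t))"
    using sl p t by (intro diff_left_mono mult_right_mono) auto
  also have "\<dots> = - (real m * t^2 / (2 * p + t))"
    using p t by (simp add: field_simps power2_eq_square)
  also have "\<dots> \<le> - L" using L by simp
  finally have "real m * p * (exp s - 1) - s * (real m * (p + t)) \<le> - L" .
  then have "exp (real m * p * (exp s - 1) - s * (real m * (p + t))) \<le> exp (- L)" by simp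
  with tail_upper[OF fin s0, where m=m and d=d and A=A and a="real m * (p + t)"] show ?thesis
    unfolding p(1)[symmetric] by linarith
qed

lemma chernoff_lower:
  fixes Q :: "'b pmf" and A :: "'b set" and d :: 'b and p t L :: real
  assumes fin: "finite (set_pmf Q)" and p: "p = measure_pmf.prob Q A" "0 < p"
    and t: "0 < t" and L: "L \<le> real m * t^2 / (2 * p + t)"
  shows "measure_pmf.prob (Pi_pmf {..<m} d (\<lambda>_. Q))
           {f. real (card {l\<in>{..<m}. f l \<in> A}) \<le> real m * (p - t)} \<le> exp (- L)"
proof -
  define x where "x = t / p"
  have x0: "0 \<le> x" using p t by (simp add: x_def)
  have ex: "exp (- x) - 1 \<le> - x + x^2 / 2" using exp_neg_upper[OF x0] by simp
  have "real m * p * (exp (- x) - 1) + x * (real m * (p - t)) \<le> real m * p * (- x + x^2 / 2) + x * (real m * (p - t))"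
    using p ex by (intro add_right_mono mult_left_mono) auto
  also have "\<dots> = - (real m * t^2 / (2 * p))"
    using p t by (simp add: x_def field_simps power2_eq_square)
  also have "\<dots> \<le> - (real m * t^2 / (2 * p + t))"
    using p t by (intro le_imp_neg_le divide_left_mono) auto
  also have "\<dots> \<le> - L" using L by simp
  finally have "exp (real m * p * (exp (- x) - 1) + x * (real m * (p - t))) \<le> exp (- L)" by simp
  with tail_lower[OF fin x0, where m=m and d=d and A=A and a="real m * (p - t)"] show ?thesis
    unfolding p(1)[symmetric] by linarith
qed

lemma card_supersets:
  assumes U: "finite U" and T: "T \<subseteq> U" and k: "card T \<le> k"
  shows "card {I. I \<subseteq> U \<and> card I = k \<and> T \<subseteq> I} = (card U - card T) choose (k - card T)"
proof -
  have fT: "finite T" using U T finite_subset by blast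
  have eq: "{I. I \<subseteq> U \<and> card I = k \<and> T \<subseteq> I} = (\<lambda>J. J \<union> T) ` {J. J \<subseteq> U - T \<and> card J = k - card T}"
  proof (intro equalityI subsetI)
    fix I assume "I \<in> {I. I \<subseteq> U \<and> card I = k \<and> T \<subseteq> I}"
    then have I: "I \<subseteq> U" "card I = k" "T \<subseteq> I" by auto
    have fI: "finite I" using I U finite_subset by blast
    have "card (I - T) = k - card T" using I fT by (simp add: card_Diff_subset)
    moreover have "I = (I - T) \<union> T" using I by auto
    ultimately show "I \<in> (\<lambda>J. J \<union> T) ` {J. J \<subseteq> U - T \<and> card J = k - card T}"
      using I by blast
  next
    fix I assume "I \<in> (\<lambda>J. J \<union> T) ` {J. J \<subseteq> U - T \<and> card J = k - card T}"
    then obtain J where J: "J \<subseteq> U - T" "card J = k - card T" "I = J \<union> T" by auto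
    have fJ: "finite J" using J U finite_subset by (metis finite_Diff)
    have "J \<inter> T = {}" using J by auto
    then have "card I = card J + card T" using J(3) card_Un_disjoint[OF fJ fT] by simp
    then show "I \<in> {I. I \<subseteq> U \<and> card I = k \<and> T \<subseteq> I}" using J k T by auto
  qed
  have inj: "inj_on (\<lambda>J. J \<union> T) {J. J \<subseteq> U - T \<and> card J = k - card T}"
    by (rule inj_onI) blast
  have "card {I. I \<subseteq> U \<and> card I = k \<and> T \<subseteq> I} = card {J. J \<subseteq> U - T \<and> card J = k - card T}"
    unfolding eq by (rule card_image[OF inj])
  also have "\<dots> = card (U - T) choose (k - card T)" using U by (simp add: n_subsets)
  also have "card (U - T) = card U - card T" using T fT by (simp add: card_Diff_subset)
  finally show ?thesis .
qed

lemma ksubset_set: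
  assumes "k \<le> n"
  shows "finite {I. I \<subseteq> {1..n} \<and> card I = k}" "{I. I \<subseteq> {1..n} \<and> card I = (k::nat)} \<noteq> {}"
    "card {I. I \<subseteq> {1..n} \<and> card I = k} = n choose k"
proof -
  show "finite {I. I \<subseteq> {1..n} \<and> card I = k}" by (rule finite_subset[of _ "Pow {1..n}"]) auto
  show c: "card {I. I \<subseteq> {1..n} \<and> card I = k} = n choose k" by (simp add: n_subsets)
  have "0 < n choose k" using assms by simp
  then show "{I. I \<subseteq> {1..n} \<and> card I = (k::nat)} \<noteq> {}" using c by (metis card.empty less_irrefl)
qed

lemma ksubset_finite: "k \<le> n \<Longrightarrow> finite (set_pmf (ksubset_pmf n k))"
  unfolding ksubset_pmf_def using ksubset_set by simp

lemma ksubset_prob_sub: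
  assumes "k \<le> n" and T: "T \<subseteq> {1..n}" "card T \<le> k"
  shows "measure_pmf.prob (ksubset_pmf n k) {J. T \<subseteq> J} = real ((n - card T) choose (k - card T)) / real (n choose k)"
proof -
  have "{I. I \<subseteq> {1..n} \<and> card I = k} \<inter> {J. T \<subseteq> J} = {I. I \<subseteq> {1..n} \<and> card I = k \<and> T \<subseteq> I}" by auto
  then show ?thesis
    unfolding ksubset_pmf_def using ksubset_set[OF assms(1)] card_supersets[of "{1..n}" T k] T
    by (simp add: measure_pmf_of_set)
qed

lemma ksubset_prob1:
  assumes "1 \<le> k" "k \<le> n" "i \<in> {1..n}"
  shows "measure_pmf.prob (ksubset_pmf n k) {J. i \<in> J} = real k / real n"
proof -
  have P: "measure_pmf.prob (ksubset_pmf n k) {J. {i} \<subseteq> J} = real ((n - 1) choose (k - 1)) / real (n choose k)"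
    using ksubset_prob_sub[of k n "{i}"] assms by simp
  have "k * (n choose k) = n * ((n - 1) choose (k - 1))"
    using assms by (simp add: times_binomial_minus1_eq)
  then have "real k * real (n choose k) = real n * real ((n - 1) choose (k - 1))"
    by (metis of_nat_mult)
  moreover have "0 < n choose k" "0 < n" using assms by auto
  ultimately have "real ((n - 1) choose (k - 1)) / real (n choose k) = real k / real n"
    by (simp add: field_simps)
  with P show ?thesis by simp
qed

lemma ksubset_prob2:
  assumes "2 \<le> k" "k \<le> n" "i \<in> {1..n}" "j \<in> {1..n}" "i \<noteq> j"
  shows "measure_pmf.prob (ksubset_pmf n k) {J. {i, j} \<subseteq> J} = real (k * (k - 1)) / (real n * (real n - 1))"
proof -
  have c2: "card {i, j} = 2" using assms by simp
  have P: "measure_pmf.prob (ksubset_pmf n k) {J. {i, j} \<subseteq> J} = real ((n - 2) choose (k - 2)) / real (n choose k)"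
    using ksubset_prob_sub[of k n "{i, j}"] assms unfolding c2 by simp
  have "k * (n choose k) = n * ((n - 1) choose (k - 1))"
    using assms by (simp add: times_binomial_minus1_eq)
  moreover have "(k - 1) * ((n - 1) choose (k - 1)) = (n - 1) * ((n - 1 - 1) choose (k - 1 - 1))"
    using assms by (intro times_binomial_minus1_eq) simp
  ultimately have "real (k * (k - 1)) * real (n choose k) = real n * (real n - 1) * real ((n - 2) choose (k - 2))"
    using assms
    by (smt (verit, ccfv_threshold) diff_diff_left mult.assoc mult.commute of_nat_1 of_nat_diff of_nat_mult one_add_one le_trans one_le_numeral)
  moreover have "0 < n choose k" "1 < real n" using assms by auto
  ultimately have "real ((n - 2) choose (k - 2)) / real (n choose k) = real (k * (k - 1)) / (real n * (real n - 1))"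
    by (simp add: field_simps)
  with P show ?thesis by simp
qed


theorem lemma9:
  fixes n k :: nat and \<epsilon> \<delta> :: real
  assumes "2 \<le> k" "k \<le> n - 1"
    and "0 < \<epsilon>" "\<epsilon> < 1" and "0 < \<delta>"
  defines "\<gamma> \<equiv> real (k * (n - k)) / (2 * real n * (real n - 1))"
  defines "m \<equiv> nat \<lceil>12 * real n * (real n - 1)^2 / (\<epsilon>^2 * real (n - k)^2 * real k)
                     * ln (2 * real n ^ 2 / \<delta>)\<rceil>"
  shows "measure_pmf.prob (sample_pmf n k m)
           {I. (\<forall>i\<in>{1..n}. freq1 m I i \<in> {real k / real n - \<epsilon> * \<gamma> .. real k / real n + \<epsilon> * \<gamma>})
             \<and> (\<forall>i\<in>{1..n}. \<forall>j\<in>{1..n}. i \<noteq> j \<longrightarrow>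
                  freq2 m I i j \<in> {real (k * (k - 1)) / (real n * (real n - 1)) - \<epsilon> * \<gamma> ..
                                   real (k * (k - 1)) / (real n * (real n - 1)) + \<epsilon> * \<gamma>})}
         \<ge> 1 - \<delta>"
  (is "measure_pmf.prob _ ?G \<ge> _")
proof (cases "1 \<le> \<delta>")
  case True
  have "0 \<le> measure_pmf.prob (sample_pmf n k m) ?G" by simp
  with True show ?thesis by linarith
next
  case False
  then have d1: "\<delta> < 1" by simp
  have n3: "3 \<le> n" and kn: "k \<le> n" and kn1: "k < n" using assms(1,2) by auto
  define N where "N = real n"
  define K where "K = real k"
  have N3: "3 \<le> N" using n3 by (simp add: N_def)
  have K2: "2 \<le> K" using assms(1) by (simp add: K_def)
  have KN: "K + 1 \<le> N" using kn1 by (simp add: K_def N_def)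
  have rnk: "real (n - k) = N - K" using kn by (simp add: N_def K_def of_nat_diff)
  define L where "L = ln (2 * N ^ 2 / \<delta>)"
  have gt1: "1 < 2 * N ^ 2 / \<delta>"
  proof -
    have "1 \<le> 2 * N^2" using mult_mono[OF N3 N3] N3 by (simp add: power2_eq_square)
    then have "\<delta> < 2 * N^2" using d1 by linarith
    then show ?thesis using assms(5) by (simp add: field_simps)
  qed
  have L0: "0 < L" using gt1 by (simp add: L_def)
  have eL: "exp (- L) = \<delta> / (2 * N ^ 2)"
  proof -
    have "exp L = 2 * N ^ 2 / \<delta>" using gt1 by (simp add: L_def)
    then show ?thesis by (simp add: exp_minus)
  qed
  define t where "t = \<epsilon> * \<gamma>"
  have \<gamma>eq: "\<gamma> = K * (N - K) / (2 * N * (N - 1))"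
    unfolding \<gamma>_def using rnk by (simp add: N_def K_def)
  have t0: "0 < t" unfolding t_def \<gamma>eq using assms(3) K2 KN N3 by (intro mult_pos_pos divide_pos_pos) auto
  define M0 where "M0 = 12 * N * (N - 1)^2 / (\<epsilon>^2 * (N - K)^2 * K) * L"
  have mM0: "M0 \<le> real m" unfolding m_def M0_def N_def K_def rnk[unfolded N_def K_def] L_def
    by linarith
  have M0t: "M0 * t^2 = 3 * K / N * L"
  proof -
    have nz: "N \<noteq> 0" "N - 1 \<noteq> 0" "N - K \<noteq> 0" "K \<noteq> 0" "\<epsilon> \<noteq> 0" using assms(3) K2 KN N3 by auto
    show ?thesis unfolding M0_def t_def \<gamma>eq using nz
      by (simp add: power2_eq_square divide_simps)
  qed
  have keyM: "3 * K / N * L \<le> real m * t^2"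
    using mM0 M0t by (metis mult_right_mono zero_le_power2)
  define p1 where "p1 = K / N"
  define p2 where "p2 = real (k * (k - 1)) / (N * (N - 1))"
  have p2eq: "p2 = K * (K - 1) / (N * (N - 1))"
    using assms(1) by (simp add: p2_def K_def of_nat_diff)
  have p1pos: "0 < p1" using K2 N3 by (simp add: p1_def)
  have p2pos: "0 < p2" unfolding p2eq using K2 N3 by (intro divide_pos_pos mult_pos_pos) auto
  have tle: "t \<le> K * (N - K) / (2 * N * (N - 1))"
    unfolding t_def \<gamma>eq using assms(3,4) K2 KN N3
    by (intro mult_left_le_one_le divide_nonneg_pos mult_nonneg_nonneg mult_pos_pos) auto
  have b1: "2 * p1 + t \<le> 3 * K / N"
  proof -
    have "K * (N - K) / (2 * N * (N - 1)) \<le> K / N"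
      using K2 KN N3 by (simp add: divide_simps)
    then show ?thesis using tle by (simp add: p1_def)
  qed
  have b2: "2 * p2 + t \<le> 3 * K / N"
  proof -
    have "2 * (K * (K - 1) / (N * (N - 1))) + K * (N - K) / (2 * N * (N - 1)) \<le> 3 * K / N"
    proof -
      have "2 * (K * (K - 1) / (N * (N - 1))) + K * (N - K) / (2 * N * (N - 1))
          = K * (4 * (K - 1) + (N - K)) / (2 * N * (N - 1))"
      proof -
        have nz: "N \<noteq> 0" "N - 1 \<noteq> 0" using N3 by auto
        show ?thesis using nz by (simp add: divide_simps) (simp add: algebra_simps)
      qed
      also have "\<dots> \<le> K * (6 * (N - 1)) / (2 * N * (N - 1))"
        using K2 KN N3 by (intro divide_right_mono mult_left_mono) auto
      also have "\<dots> = 3 * K / N"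
      proof -
        have nz: "N \<noteq> 0" "N - 1 \<noteq> 0" using N3 by auto
        show ?thesis using nz by (simp add: divide_simps)
      qed
      finally show ?thesis .
    qed
    then show ?thesis using tle unfolding p2eq by linarith
  qed
  have Lb: "L \<le> real m * t^2 / (2 * p + t)" if "0 < p" "2 * p + t \<le> 3 * K / N" for p
  proof -
    have "L * (2 * p + t) \<le> L * (3 * K / N)" using that L0 by (intro mult_left_mono) auto
    also have "\<dots> \<le> real m * t^2" using keyM by (simp add: mult.commute)
    finally show ?thesis using that t0 by (simp add: divide_simps mult.commute)
  qed
  have L1: "L \<le> real m * t^2 / (2 * p1 + t)" by (rule Lb[OF p1pos b1])
  have L2: "L \<le> real m * t^2 / (2 * p2 + t)" by (rule Lb[OF p2pos b2])
  define Q where "Q = ksubset_pmf n k"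
  define P where "P = Pi_pmf {..<m} {} (\<lambda>_. Q)"
  have PS: "sample_pmf n k m = P" by (simp add: P_def Q_def sample_pmf_def)
  have finQ: "finite (set_pmf Q)" using kn by (simp add: Q_def ksubset_finite)
  define C where "C = (\<lambda>A (I :: nat \<Rightarrow> nat set). real (card {l\<in>{..<m}. I l \<in> A}))"
  define B where "B = (\<lambda>A p. {I. real m * (p + t) \<le> C A I} \<union> {I. C A I \<le> real m * (p - t)})"
  have PB: "measure_pmf.prob P (B A p) \<le> 2 * exp (- L)"
    if "p = measure_pmf.prob Q A" "0 < p" "L \<le> real m * t^2 / (2 * p + t)" for A p
  proof -
    have "measure_pmf.prob P (B A p) \<le> measure_pmf.prob P {I. real m * (p + t) \<le> C A I}
                                         + measure_pmf.prob P {I. C A I \<le> real m * (p - t)}"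
      unfolding B_def by (rule measure_Un_le) auto
    also have "\<dots> \<le> exp (- L) + exp (- L)"
      unfolding P_def C_def
      by (intro add_mono chernoff_upper[OF finQ that(1,2) t0 that(3)] chernoff_lower[OF finQ that(1,2) t0 that(3)])
    finally show ?thesis by simp
  qed
  define Bad where "Bad = (\<lambda>i. B {J. i \<in> J} p1 \<union> (\<Union>j\<in>{1..n} - {i}. B {J. {i, j} \<subseteq> J} p2))"
  have PBad: "measure_pmf.prob P (Bad i) \<le> 2 * N * exp (- L)" if i: "i \<in> {1..n}" for i
  proof -
    have "measure_pmf.prob P (Bad i) \<le> measure_pmf.prob P (B {J. i \<in> J} p1)
            + measure_pmf.prob P (\<Union>j\<in>{1..n} - {i}. B {J. {i, j} \<subseteq> J} p2)"
      unfolding Bad_def by (rule measure_Un_le) auto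
    also have "\<dots> \<le> 2 * exp (- L) + (\<Sum>j\<in>{1..n} - {i}. measure_pmf.prob P (B {J. {i, j} \<subseteq> J} p2))"
    proof (intro add_mono)
      show "measure_pmf.prob P (B {J. i \<in> J} p1) \<le> 2 * exp (- L)"
        using ksubset_prob1[of k n i] assms(1) kn i p1pos L1
        by (intro PB) (auto simp: Q_def p1_def K_def N_def)
      show "measure_pmf.prob P (\<Union>j\<in>{1..n} - {i}. B {J. {i, j} \<subseteq> J} p2)
            \<le> (\<Sum>j\<in>{1..n} - {i}. measure_pmf.prob P (B {J. {i, j} \<subseteq> J} p2))"
        by (rule measure_subadditive_finite) (auto simp: measure_pmf.emeasure_finite)
    qed
    also have "(\<Sum>j\<in>{1..n} - {i}. measure_pmf.prob P (B {J. {i, j} \<subseteq> J} p2))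
             \<le> (\<Sum>j\<in>{1..n} - {i}. 2 * exp (- L))"
    proof (rule sum_mono)
      fix j assume j: "j \<in> {1..n} - {i}"
      show "measure_pmf.prob P (B {J. {i, j} \<subseteq> J} p2) \<le> 2 * exp (- L)"
        using ksubset_prob2[of k n i j] assms(1) kn i j p2pos L2
        by (intro PB) (auto simp: Q_def p2_def K_def N_def)
    qed
    also have "(\<Sum>j\<in>{1..n} - {i}. 2 * exp (- L)) = (N - 1) * (2 * exp (- L))"
      using i by (simp add: N_def of_nat_diff)
    finally show ?thesis by (simp add: algebra_simps)
  qed
  have PU: "measure_pmf.prob P (\<Union>i\<in>{1..n}. Bad i) \<le> \<delta>"
  proof -
    have "measure_pmf.prob P (\<Union>i\<in>{1..n}. Bad i) \<le> (\<Sum>i\<in>{1..n}. measure_pmf.prob P (Bad i))"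
      by (rule measure_subadditive_finite) (auto simp: measure_pmf.emeasure_finite)
    also have "\<dots> \<le> (\<Sum>i\<in>{1..n}. 2 * N * exp (- L))" by (rule sum_mono) (rule PBad)
    also have "\<dots> = 2 * N^2 * exp (- L)" by (simp add: N_def power2_eq_square)
    also have "\<dots> = \<delta>" using N3 by (simp add: eL)
    finally show ?thesis .
  qed
  have sub: "UNIV - (\<Union>i\<in>{1..n}. Bad i) \<subseteq> ?G"
  proof
    fix I assume "I \<in> UNIV - (\<Union>i\<in>{1..n}. Bad i)"
    then have nb: "I \<notin> Bad i" if "i \<in> {1..n}" for i using that by blast
    have mpos: "0 < real m"
    proof -
      have "0 < M0" unfolding M0_def using assms(3) K2 KN N3 L0
        by (intro mult_pos_pos divide_pos_pos) auto
      then show ?thesis using mM0 by linarith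
    qed
    have inb: "C A I / real m \<in> {p - t .. p + t}" if "I \<notin> B A p" for A p
    proof -
      have "C A I < real m * (p + t)" "real m * (p - t) < C A I" using that by (auto simp: B_def)
      then show ?thesis using mpos by (simp add: divide_simps mult.commute)
    qed
    show "I \<in> ?G"
    proof (intro CollectI conjI ballI impI)
      fix i assume i: "i \<in> {1..n}"
      have "I \<notin> B {J. i \<in> J} p1" using nb[OF i] by (simp add: Bad_def)
      from inb[OF this] show "freq1 m I i \<in> {real k / real n - \<epsilon> * \<gamma> .. real k / real n + \<epsilon> * \<gamma>}"
        by (simp add: freq1_def C_def p1_def K_def N_def t_def)
    next
      fix i j assume i: "i \<in> {1..n}" and j: "j \<in> {1..n}" and ij: "i \<noteq> j"
      have "I \<notin> B {J. {i, j} \<subseteq> J} p2" using nb[OF i] j ij by (simp add: Bad_def)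
      from inb[OF this] show "freq2 m I i j \<in> {real (k * (k - 1)) / (real n * (real n - 1)) - \<epsilon> * \<gamma> ..
                                   real (k * (k - 1)) / (real n * (real n - 1)) + \<epsilon> * \<gamma>}"
        by (simp add: freq2_def C_def p2_def K_def N_def t_def)
    qed
  qed
  have "1 - \<delta> \<le> 1 - measure_pmf.prob P (\<Union>i\<in>{1..n}. Bad i)" using PU by simp
  also have "\<dots> = measure_pmf.prob P (UNIV - (\<Union>i\<in>{1..n}. Bad i))"
    using measure_pmf.prob_compl[of "\<Union>i\<in>{1..n}. Bad i" P] by simp
  also have "\<dots> \<le> measure_pmf.prob P ?G" by (rule measure_pmf.finite_measure_mono[OF sub]) simp
  finally show ?thesis by (simp add: PS)
qed

end
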